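(* Let $\mathbb{X},\mathbb{Y}$ be real normed linear spaces and $T\in\mathbb{B}(\mathbb{X},\mathbb{Y})$ such that: (i) $M_T=\{\pm x_0\}$ for some $x_0\in S_{\mathbb{X}}$; (ii) $Tx_0$ is a smooth point of $\mathbb{Y}$; (iii) every norming sequence $\{x_n\}$ for $T$ has a subsequence converging (in norm) to $ax_0$ for some $a\in\mathbb{R}$ with $|a|=1$. Then $T$ is a smooth point of $\mathbb{B}(\mathbb{X},\mathbb{Y})$.
   Context: All spaces are real; $\mathbb{B}(\mathbb{X},\mathbb{Y})$ has the operator norm; $S_{\mathbb{X}}$ is the unit sphere; $M_T=\{x\in S_{\mathbb{X}}:\|Tx\|=\|T\|\}$. A norming sequence for $T$ is $\{x_n\}\subseteq S_{\mathbb{X}}$ with $\|Tx_n\|\to\|T\|$. A nonzero element $x$ of a normed space $\mathbb{Z}$ is smooth if there is a unique $f\in\mathbb{Z}^*$ with $\|f\|=1$ and $f(x)=\|x\|$. *)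

theory Defs
  imports "HOL-Analysis.Analysis"
begin

definition smooth_point :: "'a::real_normed_vector \<Rightarrow> bool" where
  "smooth_point x \<longleftrightarrow> x \<noteq> 0 \<and>
     (\<exists>!f :: 'a \<Rightarrow>\<^sub>L real. norm f = 1 \<and> blinfun_apply f x = norm x)"

definition norm_attain_set :: "('a::real_normed_vector \<Rightarrow>\<^sub>L 'b::real_normed_vector) \<Rightarrow> 'a set" where
  "norm_attain_set T = {x. norm x = 1 \<and> norm (blinfun_apply T x) = norm T}"

definition norming_sequence :: "('a::real_normed_vector \<Rightarrow>\<^sub>L 'b::real_normed_vector) \<Rightarrow> (nat \<Rightarrow> 'a) \<Rightarrow> bool" where
  "norming_sequence T xs \<longleftrightarrow> (\<forall>n. norm (xs n) = 1) \<and>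
     (\<lambda>n. norm (blinfun_apply T (xs n))) \<longlonglongrightarrow> norm T"

end

theory Submission
  imports Defs
begin


definition pg :: "('b::real_normed_vector \<times> real) set \<Rightarrow> bool" where
 "pg G \<longleftrightarrow> (0,0) \<in> G \<and> (\<forall>x a y b. (x,a)\<in>G \<longrightarrow> (y,b)\<in>G \<longrightarrow> (x+y,a+b)\<in>G)
   \<and> (\<forall>x a r. (x,a)\<in>G \<longrightarrow> (r *\<^sub>R x, r*a)\<in>G)
   \<and> (\<forall>x a b. (x,a)\<in>G \<longrightarrow> (x,b)\<in>G \<longrightarrow> a=b) \<and> (\<forall>x a. (x,a)\<in>G \<longrightarrow> a \<le> norm x)"

lemma pgD:
  assumes "pg G"
  shows "(0,0) \<in> G" "\<And>x a y b. (x,a)\<in>G \<Longrightarrow> (y,b)\<in>G \<Longrightarrow> (x+y,a+b)\<in>G"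
    "\<And>x a r. (x,a)\<in>G \<Longrightarrow> (r *\<^sub>R x, r*a)\<in>G"
    "\<And>x a b. (x,a)\<in>G \<Longrightarrow> (x,b)\<in>G \<Longrightarrow> a=b" "\<And>x a. (x,a)\<in>G \<Longrightarrow> a \<le> norm x"
  using assms unfolding pg_def by blast+

lemma pg_chain:
  assumes C: "C \<in> chains {G. pg G \<and> G0 \<subseteq> G}" and ne: "C \<noteq> {}"
  shows "pg (\<Union>C)"
proof -
  have P: "\<And>G. G \<in> C \<Longrightarrow> pg G" using chainsD2[OF C] by blast
  have two: "\<And>G H. G \<in> C \<Longrightarrow> H \<in> C \<Longrightarrow> \<exists>K\<in>C. G \<subseteq> K \<and> H \<subseteq> K"
  proof -
    fix G H assume "G \<in> C" "H \<in> C"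
    then have "G \<subseteq> H \<or> H \<subseteq> G" using chainsD[OF C] by blast
    then show "\<exists>K\<in>C. G \<subseteq> K \<and> H \<subseteq> K"
    proof
      assume "G \<subseteq> H" then show ?thesis using \<open>H \<in> C\<close> by blast
    next
      assume "H \<subseteq> G" then show ?thesis using \<open>G \<in> C\<close> by blast
    qed
  qed
  obtain G1 where "G1 \<in> C" using ne by blast
  have 0: "(0,0) \<in> \<Union>C" using pgD(1)[OF P[OF \<open>G1 \<in> C\<close>]] \<open>G1 \<in> C\<close> by blast
  have 1: "(x+y,a+b) \<in> \<Union>C" if "(x,a) \<in> \<Union>C" "(y,b) \<in> \<Union>C" for x a y b
  proof -
    note h = that
    obtain G H where "G\<in>C" "H\<in>C" "(x,a)\<in>G" "(y,b)\<in>H" using h by blast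
    then obtain K where "K\<in>C" "(x,a)\<in>K" "(y,b)\<in>K" using two by blast
    then show ?thesis using pgD(2)[OF P[OF \<open>K\<in>C\<close>]] by blast
  qed
  have 2: "(r *\<^sub>R x, r*a) \<in> \<Union>C" if "(x,a) \<in> \<Union>C" for x a r
  proof -
    note h = that
    obtain G where "G\<in>C" "(x,a)\<in>G" using h by blast
    then show ?thesis using pgD(3)[OF P[OF \<open>G\<in>C\<close>]] by blast
  qed
  have 3: "a = b" if "(x,a) \<in> \<Union>C" "(x,b) \<in> \<Union>C" for x a b
  proof -
    note h = that
    obtain G H where "G\<in>C" "H\<in>C" "(x,a)\<in>G" "(x,b)\<in>H" using h by blast
    then obtain K where "K\<in>C" "(x,a)\<in>K" "(x,b)\<in>K" using two by blast
    then show ?thesis using pgD(4)[OF P[OF \<open>K\<in>C\<close>]] by blast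
  qed
  have 4: "a \<le> norm x" if "(x,a) \<in> \<Union>C" for x a
  proof -
    note h = that
    obtain G where "G\<in>C" "(x,a)\<in>G" using h by blast
    then show ?thesis using pgD(5)[OF P[OF \<open>G\<in>C\<close>]] by blast
  qed
  show ?thesis unfolding pg_def
    apply (intro conjI allI impI)
        apply (rule 0)
       apply (erule (1) 1)
      apply (erule 2)
     apply (erule (1) 3)
    apply (erule 4)
    done
qed

lemma pg_extend:
  assumes G: "pg G" and y: "\<forall>a. (y,a) \<notin> G"
  shows "\<exists>G'. pg G' \<and> G \<subseteq> G' \<and> G' \<noteq> G"
proof -
  have z: "(0,0)\<in>G" and add: "\<And>x a y b. (x,a)\<in>G \<Longrightarrow> (y,b)\<in>G \<Longrightarrow> (x+y,a+b)\<in>G"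
    and sc: "\<And>x a r. (x,a)\<in>G \<Longrightarrow> (r *\<^sub>R x, r*a)\<in>G"
    and fn: "\<And>x a b. (x,a)\<in>G \<Longrightarrow> (x,b)\<in>G \<Longrightarrow> a=b"
    and dm: "\<And>x a. (x,a)\<in>G \<Longrightarrow> a \<le> norm x" using pgD[OF G] by blast+
  define L where "L = {a - norm (m - y) | m a. (m,a)\<in>G}"
  define c where "c = Sup L"
  have key: "\<And>m1 a1 m2 a2. (m1,a1)\<in>G \<Longrightarrow> (m2,a2)\<in>G \<Longrightarrow> a1 - norm (m1 - y) \<le> norm (m2 + y) - a2"
  proof -
    fix m1 a1 m2 a2 assume "(m1,a1)\<in>G" "(m2,a2)\<in>G"
    then have "a1 + a2 \<le> norm (m1 + m2)" using add dm by blast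
    also have "norm (m1 + m2) \<le> norm (m1 - y) + norm (m2 + y)"
      using norm_triangle_ineq[of "m1 - y" "m2 + y"] by simp
    finally show "a1 - norm (m1 - y) \<le> norm (m2 + y) - a2" by linarith
  qed
  have Lne: "L \<noteq> {}" using z L_def by blast
  have Lbdd: "bdd_above L" unfolding bdd_above_def L_def using key[OF _ z] by force
  have c1: "\<And>m a. (m,a)\<in>G \<Longrightarrow> a - norm (m - y) \<le> c"
    unfolding c_def by (rule cSup_upper[OF _ Lbdd]) (auto simp: L_def)
  have c2: "\<And>m a. (m,a)\<in>G \<Longrightarrow> c \<le> norm (m + y) - a"
    unfolding c_def using key by (intro cSup_least[OF Lne]) (auto simp: L_def)
  define G' where "G' = {(m + t *\<^sub>R y, a + t * c) | m a t. (m,a)\<in>G}"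
  have mem: "\<And>m a t. (m,a)\<in>G \<Longrightarrow> (m + t *\<^sub>R y, a + t * c) \<in> G'"
    unfolding G'_def by blast
  have "pg G'" unfolding pg_def
  proof (intro conjI allI impI)
    show "(0,0) \<in> G'" using mem[OF z, of 0] by simp
  next
    fix x a x' b assume "(x,a)\<in>G'" "(x',b)\<in>G'"
    then obtain m a1 t m' a1' t' where "(m,a1)\<in>G" "(m',a1')\<in>G" "x = m + t *\<^sub>R y" "a = a1 + t*c"
      "x' = m' + t' *\<^sub>R y" "b = a1' + t'*c" unfolding G'_def by blast
    then show "(x+x',a+b)\<in>G'" using mem[OF add[OF \<open>(m,a1)\<in>G\<close> \<open>(m',a1')\<in>G\<close>], of "t+t'"]
      by (simp add: algebra_simps)
  next
    fix x a r assume "(x,a)\<in>G'"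
    then obtain m a1 t where "(m,a1)\<in>G" "x = m + t *\<^sub>R y" "a = a1 + t*c" unfolding G'_def by blast
    then show "(r *\<^sub>R x, r*a)\<in>G'" using mem[OF sc[OF \<open>(m,a1)\<in>G\<close>, of r], of "r*t"]
      by (simp add: algebra_simps)
  next
    fix x a b assume "(x,a)\<in>G'" "(x,b)\<in>G'"
    then obtain m a1 t m' a1' t' where m: "(m,a1)\<in>G" "(m',a1')\<in>G" "x = m + t *\<^sub>R y" "a = a1 + t*c"
      "x = m' + t' *\<^sub>R y" "b = a1' + t'*c" unfolding G'_def by blast
    have d: "(m - m', a1 - a1') \<in> G" using add[OF m(1) sc[OF m(2), of "-1"]] by simp
    show "a = b"
    proof (cases "t = t'")
      case True
      then have "m = m'" using m by simp
      then have "a1 = a1'" using fn m by blast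
      then show ?thesis using m True by simp
    next
      case False
      have "m - m' = (t' - t) *\<^sub>R y" using m by (simp add: algebra_simps)
      then have "(1/(t'-t)) *\<^sub>R (m - m') = y" using False by simp
      then have "(y, (1/(t'-t)) * (a1 - a1')) \<in> G" using sc[OF d] by metis
      then show ?thesis using y by blast
    qed
  next
    fix x a assume "(x,a)\<in>G'"
    then obtain m a1 t where m: "(m,a1)\<in>G" "x = m + t *\<^sub>R y" "a = a1 + t*c" unfolding G'_def by blast
    consider "t = 0" | "t > 0" | "t < 0" by linarith
    then show "a \<le> norm x"
    proof cases
      case 1 then show ?thesis using m dm by simp
    next
      case 2
      have e: "t *\<^sub>R ((1/t) *\<^sub>R m + y) = x" using 2 m by (simp add: scaleR_add_right)
      have "c \<le> norm ((1/t) *\<^sub>R m + y) - (1/t)*a1" using c2[OF sc[OF m(1)]] .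
      then have "t * c \<le> t * (norm ((1/t) *\<^sub>R m + y) - (1/t)*a1)" using 2 by simp
      also have "\<dots> = norm (t *\<^sub>R ((1/t) *\<^sub>R m + y)) - a1" using 2 by (simp add: right_diff_distrib)
      also have "\<dots> = norm x - a1" using e by simp
      finally show ?thesis using m by simp
    next
      case 3
      define s where "s = -t"
      have s: "s > 0" using 3 s_def by simp
      have e: "s *\<^sub>R ((1/s) *\<^sub>R m - y) = x" using s m s_def by (simp add: scaleR_diff_right)
      have "(1/s)*a1 - norm ((1/s) *\<^sub>R m - y) \<le> c" using c1[OF sc[OF m(1)]] .
      then have "s * ((1/s)*a1 - norm ((1/s) *\<^sub>R m - y)) \<le> s * c" using s by simp
      also have "s * ((1/s)*a1 - norm ((1/s) *\<^sub>R m - y)) = a1 - norm (s *\<^sub>R ((1/s) *\<^sub>R m - y))"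
        using s by (simp add: right_diff_distrib)
      finally have "a1 - norm x \<le> s * c" using e by simp
      then show ?thesis using m s_def by simp
    qed
  qed
  moreover have "G \<subseteq> G'" using mem[of _ _ 0] by auto
  moreover have "(y, c) \<in> G'" using mem[OF z, of 1] by simp
  ultimately show ?thesis using y by blast
qed

lemma hahn_banach_pg:
  fixes G0 :: "('b::real_normed_vector \<times> real) set"
  assumes "pg G0"
  shows "\<exists>f::'b\<Rightarrow>\<^sub>Lreal. norm f \<le> 1 \<and> (\<forall>x a. (x,a)\<in>G0 \<longrightarrow> blinfun_apply f x = a)"
proof -
  define A where "A = {G. pg G \<and> G0 \<subseteq> G}"
  have "\<forall>C\<in>chains A. \<exists>U\<in>A. \<forall>X\<in>C. X \<subseteq> U"
  proof
    fix C assume C: "C \<in> chains A"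
    show "\<exists>U\<in>A. \<forall>X\<in>C. X \<subseteq> U"
    proof (cases "C = {}")
      case True then show ?thesis using assms A_def by auto
    next
      case False
      have "\<Union>C \<in> A" using pg_chain[OF C[unfolded A_def] False] False C chainsD2 unfolding A_def by blast
      then show ?thesis by blast
    qed
  qed
  from Zorn_Lemma2[OF this] obtain M where M: "M \<in> A" and max: "\<forall>X\<in>A. M \<subseteq> X \<longrightarrow> X = M" by blast
  have pM: "pg M" and G0M: "G0 \<subseteq> M" using M A_def by auto
  have all: "\<forall>y. \<exists>a. (y,a) \<in> M"
  proof (rule ccontr)
    assume "\<not> ?thesis"
    then obtain y where "\<forall>a. (y,a)\<notin>M" by blast
    from pg_extend[OF pM this] obtain G' where "pg G'" "M \<subseteq> G'" "G' \<noteq> M" by blast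
    then show False using max G0M A_def by blast
  qed
  have add: "\<And>x a y b. (x,a)\<in>M \<Longrightarrow> (y,b)\<in>M \<Longrightarrow> (x+y,a+b)\<in>M"
    and sc: "\<And>x a r. (x,a)\<in>M \<Longrightarrow> (r *\<^sub>R x, r*a)\<in>M"
    and fn: "\<And>x a b. (x,a)\<in>M \<Longrightarrow> (x,b)\<in>M \<Longrightarrow> a=b"
    and dm: "\<And>x a. (x,a)\<in>M \<Longrightarrow> a \<le> norm x" using pgD[OF pM] by blast+
  define f where "f y = (THE a. (y,a)\<in>M)" for y
  have fM: "\<And>y. (y, f y) \<in> M"
  proof -
    fix y obtain a where a: "(y,a)\<in>M" using all by blast
    have "(THE a. (y,a)\<in>M) = a" using a fn by blast
    then show "(y, f y) \<in> M" using a f_def by simp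
  qed
  have fv: "\<And>y a. (y,a)\<in>M \<Longrightarrow> f y = a" using fM fn by blast
  have lin_add: "\<And>x y. f (x + y) = f x + f y" using fv add fM by blast
  have lin_sc: "\<And>r x. f (r *\<^sub>R x) = r *\<^sub>R f x" using fv sc fM by simp
  have bnd: "\<And>x. norm (f x) \<le> norm x * 1"
  proof -
    fix x
    have "f x \<le> norm x" using dm fM by blast
    moreover have "f (-x) \<le> norm (-x)" using dm fM by blast
    moreover have "f (-x) = - f x" using lin_sc[of "-1" x] by simp
    ultimately show "norm (f x) \<le> norm x * 1" by simp
  qed
  have bl: "bounded_linear f" by (rule bounded_linear_intro[OF lin_add lin_sc bnd])
  define F where "F = Blinfun f"
  have Fa: "blinfun_apply F = f" using bl F_def bounded_linear_Blinfun_apply by blast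
  have "norm F \<le> 1" by (rule norm_blinfun_bound) (use bnd Fa in auto)
  moreover have "\<forall>x a. (x,a)\<in>G0 \<longrightarrow> blinfun_apply F x = a" using fv G0M Fa by auto
  ultimately show ?thesis by blast
qed



lemma near_norm:
  fixes B :: "'a::real_normed_vector \<Rightarrow>\<^sub>L 'b::real_normed_vector" and x0 :: 'a
  assumes x0: "norm x0 = 1" and e: "e > 0"
  shows "\<exists>y. norm y = 1 \<and> norm B - e < norm (blinfun_apply B y)"
proof (rule ccontr)
  assume "\<not> ?thesis"
  then have H: "\<And>y. norm y = 1 \<Longrightarrow> norm (blinfun_apply B y) \<le> norm B - e" by (auto simp: not_less)
  have nn: "0 \<le> norm B - e" using H[OF x0] norm_ge_zero[of "blinfun_apply B x0"] by linarith
  have "norm B \<le> norm B - e"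
  proof (rule norm_blinfun_bound[OF nn])
    fix x :: 'a
    show "norm (blinfun_apply B x) \<le> (norm B - e) * norm x"
    proof (cases "x = 0")
      case True then show ?thesis by simp
    next
      case False
      define y where "y = inverse (norm x) *\<^sub>R x"
      have ny: "norm y = 1" using False y_def by simp
      have "x = norm x *\<^sub>R y" using False y_def by simp
      then have "blinfun_apply B x = norm x *\<^sub>R blinfun_apply B y" by (metis blinfun.scaleR_right)
      then have "norm (blinfun_apply B x) = norm x * norm (blinfun_apply B y)" by simp
      also have "\<dots> \<le> norm x * (norm B - e)" using H[OF ny] by (simp add: mult_left_mono)
      finally show ?thesis by (simp add: mult.commute)
    qed
  qed
  then show False using e by simp
qed

lemma smooth_dir:
  fixes u v :: "'b::real_normed_vector" and g :: "'b \<Rightarrow>\<^sub>L real"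
  assumes u0: "u \<noteq> 0" and g1: "norm g = 1" and gu: "blinfun_apply g u = norm u"
   and uniq: "\<And>f::'b\<Rightarrow>\<^sub>Lreal. norm f = 1 \<Longrightarrow> blinfun_apply f u = norm u \<Longrightarrow> f = g"
   and c: "c > blinfun_apply g v"
  shows "\<exists>s>0. norm (u + s *\<^sub>R v) < norm u + s * c"
proof (rule ccontr)
  assume "\<not> ?thesis"
  then have H: "\<And>s. s > 0 \<Longrightarrow> norm u + s*c \<le> norm (u + s *\<^sub>R v)" by (meson not_less)
  have gb: "\<And>w. blinfun_apply g w \<le> norm w"
    using norm_blinfun[of g] g1 by (metis abs_le_D1 mult_1 real_norm_def)
  have ineq: "\<alpha> * norm u + \<beta> * c \<le> norm (\<alpha> *\<^sub>R u + \<beta> *\<^sub>R v)" for \<alpha> \<beta>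
  proof -
    consider "\<beta> = 0" | "\<beta> < 0" | "\<beta> > 0 \<and> \<alpha> > 0" | "\<beta> > 0 \<and> \<alpha> \<le> 0" by linarith
    then show ?thesis
    proof cases
      case 1 then show ?thesis by (simp add: mult_right_mono)
    next
      case 2
      have "\<beta> * c \<le> \<beta> * blinfun_apply g v" using 2 c by simp
      moreover have "blinfun_apply g (\<alpha> *\<^sub>R u + \<beta> *\<^sub>R v) = \<alpha> * norm u + \<beta> * blinfun_apply g v"
        using gu by (simp add: blinfun.add_right blinfun.scaleR_right)
      ultimately show ?thesis using gb[of "\<alpha> *\<^sub>R u + \<beta> *\<^sub>R v"] by linarith
    next
      case 3
      then have "norm u + (\<beta>/\<alpha>) * c \<le> norm (u + (\<beta>/\<alpha>) *\<^sub>R v)" using H[of "\<beta>/\<alpha>"] 3 by simp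
      then have "\<alpha> * (norm u + (\<beta>/\<alpha>) * c) \<le> \<alpha> * norm (u + (\<beta>/\<alpha>) *\<^sub>R v)" using 3 by simp
      also have "\<alpha> * norm (u + (\<beta>/\<alpha>) *\<^sub>R v) = norm (\<alpha> *\<^sub>R (u + (\<beta>/\<alpha>) *\<^sub>R v))" using 3 by simp
      also have "\<alpha> *\<^sub>R (u + (\<beta>/\<alpha>) *\<^sub>R v) = \<alpha> *\<^sub>R u + \<beta> *\<^sub>R v" using 3 by (simp add: scaleR_add_right)
      finally show ?thesis using 3 by (simp add: distrib_left)
    next
      case 4
      have "norm u + 1 * c \<le> norm (u + 1 *\<^sub>R v)" using H[of 1] by simp
      then have "\<beta> * (norm u + c) \<le> \<beta> * norm (u + v)" using 4 by simp
      also have "\<beta> * norm (u + v) = norm (\<beta> *\<^sub>R u + \<beta> *\<^sub>R v)" using 4 by (simp add: scaleR_add_right[symmetric])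
      also have "\<beta> *\<^sub>R u + \<beta> *\<^sub>R v = (\<alpha> *\<^sub>R u + \<beta> *\<^sub>R v) + (\<beta> - \<alpha>) *\<^sub>R u" by (simp add: algebra_simps)
      also have "norm \<dots> \<le> norm (\<alpha> *\<^sub>R u + \<beta> *\<^sub>R v) + norm ((\<beta> - \<alpha>) *\<^sub>R u)" by (rule norm_triangle_ineq)
      also have "norm ((\<beta> - \<alpha>) *\<^sub>R u) = (\<beta> - \<alpha>) * norm u" using 4 by simp
      finally show ?thesis by (simp add: algebra_simps)
    qed
  qed
  define G0 where "G0 = {(\<alpha> *\<^sub>R u + \<beta> *\<^sub>R v, \<alpha> * norm u + \<beta> * c) | \<alpha> \<beta>. True}"
  have mem: "\<And>\<alpha> \<beta>. (\<alpha> *\<^sub>R u + \<beta> *\<^sub>R v, \<alpha> * norm u + \<beta> * c) \<in> G0" unfolding G0_def by blast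
  have "pg G0" unfolding pg_def
  proof (intro conjI allI impI)
    show "(0,0) \<in> G0" using mem[of 0 0] by simp
  next
    fix x a y b assume "(x,a)\<in>G0" "(y,b)\<in>G0"
    then obtain p q p' q' where "x = p *\<^sub>R u + q *\<^sub>R v" "a = p * norm u + q * c"
      "y = p' *\<^sub>R u + q' *\<^sub>R v" "b = p' * norm u + q' * c" unfolding G0_def by blast
    then show "(x+y,a+b)\<in>G0" using mem[of "p+p'" "q+q'"] by (simp add: algebra_simps)
  next
    fix x a r assume "(x,a)\<in>G0"
    then obtain p q where "x = p *\<^sub>R u + q *\<^sub>R v" "a = p * norm u + q * c" unfolding G0_def by blast
    then show "(r *\<^sub>R x, r*a)\<in>G0" using mem[of "r*p" "r*q"] by (simp add: algebra_simps)
  next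
    fix x a b assume "(x,a)\<in>G0" "(x,b)\<in>G0"
    then obtain p q p' q' where e: "x = p *\<^sub>R u + q *\<^sub>R v" "a = p * norm u + q * c"
      "x = p' *\<^sub>R u + q' *\<^sub>R v" "b = p' * norm u + q' * c" unfolding G0_def by blast
    have z1: "(p - p') *\<^sub>R u + (q - q') *\<^sub>R v = 0" using e by (simp add: algebra_simps)
    have z2: "(p' - p) *\<^sub>R u + (q' - q) *\<^sub>R v = 0" using e by (simp add: algebra_simps)
    have "(p - p') * norm u + (q - q') * c \<le> 0" using ineq[of "p-p'" "q-q'"] z1 by simp
    moreover have "(p' - p) * norm u + (q' - q) * c \<le> 0" using ineq[of "p'-p" "q'-q"] z2 by simp
    ultimately show "a = b" using e by (simp add: algebra_simps)
  next
    fix x a assume "(x,a)\<in>G0"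
    then obtain p q where "x = p *\<^sub>R u + q *\<^sub>R v" "a = p * norm u + q * c" unfolding G0_def by blast
    then show "a \<le> norm x" using ineq by simp
  qed
  from hahn_banach_pg[OF this] obtain f :: "'b \<Rightarrow>\<^sub>L real" where
    f1: "norm f \<le> 1" and fG: "\<forall>x a. (x,a)\<in>G0 \<longrightarrow> blinfun_apply f x = a" by blast
  have fu: "blinfun_apply f u = norm u" using fG mem[of 1 0] by simp
  have fv: "blinfun_apply f v = c" using fG mem[of 0 1] by simp
  have "norm u \<le> norm f * norm u" using norm_blinfun[of f u] fu by simp
  then have "1 \<le> norm f" using u0 by simp
  then have "norm f = 1" using f1 by simp
  then have "f = g" using uniq fu by blast
  then show False using fv c by simp
qed


theorem theorem3p4:
  fixes T :: "'a::real_normed_vector \<Rightarrow>\<^sub>L 'b::real_normed_vector"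
    and x0 :: 'a
  assumes "norm x0 = 1"
    and "norm_attain_set T = {x0, - x0}"
    and "smooth_point (blinfun_apply T x0)"
    and "\<And>xs. norming_sequence T xs \<Longrightarrow>
           \<exists>r a. strict_mono r \<and> \<bar>a\<bar> = 1 \<and> (xs \<circ> r) \<longlonglongrightarrow> a *\<^sub>R x0"
  shows "smooth_point T"
proof -
  note x01 = assms(1)
  have "x0 \<in> norm_attain_set T" using assms(2) by auto
  then have nTx0: "norm (blinfun_apply T x0) = norm T" by (simp add: norm_attain_set_def)
  define u where "u = blinfun_apply T x0"
  have u0: "u \<noteq> 0" using assms(3) unfolding smooth_point_def u_def by blast
  obtain g :: "'b \<Rightarrow>\<^sub>L real" where g1: "norm g = 1" and gu: "blinfun_apply g u = norm u"
    and guniq: "\<And>f::'b\<Rightarrow>\<^sub>Lreal. norm f = 1 \<Longrightarrow> blinfun_apply f u = norm u \<Longrightarrow> f = g"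
    using assms(3) unfolding smooth_point_def u_def by metis
  have nu: "norm u = norm T" using nTx0 u_def by simp
  have Tpos: "norm T > 0" using u0 nu zero_less_norm_iff by metis
  have gb: "\<And>w. \<bar>blinfun_apply g w\<bar> \<le> norm w"
    using norm_blinfun[of g] g1 by simp
  define G :: "('a \<Rightarrow>\<^sub>L 'b) \<Rightarrow>\<^sub>L real" where "G = Blinfun (\<lambda>S. blinfun_apply g (blinfun_apply S x0))"
  have blG: "bounded_linear (\<lambda>S::'a \<Rightarrow>\<^sub>L 'b. blinfun_apply g (blinfun_apply S x0))"
    by (intro bounded_linear_blinfun_apply bounded_bilinear.bounded_linear_left[OF bounded_bilinear_blinfun_apply])
  have Gapp: "\<And>S. blinfun_apply G S = blinfun_apply g (blinfun_apply S x0)"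
    using bounded_linear_Blinfun_apply[OF blG] G_def by simp
  have G1: "norm G \<le> 1"
  proof (rule norm_blinfun_bound)
    fix S :: "'a \<Rightarrow>\<^sub>L 'b"
    have "\<bar>blinfun_apply g (blinfun_apply S x0)\<bar> \<le> norm (blinfun_apply S x0)" by (rule gb)
    also have "\<dots> \<le> norm S * norm x0" by (rule norm_blinfun)
    finally show "norm (blinfun_apply G S) \<le> 1 * norm S" using Gapp x01 by simp
  qed simp
  have GT: "blinfun_apply G T = norm T" using Gapp gu nu u_def by simp
  have "norm T \<le> norm G * norm T" using norm_blinfun[of G T] GT by simp
  then have "norm G = 1" using G1 Tpos by simp
  have main: "blinfun_apply F S \<le> blinfun_apply G S"
    if F1: "norm F = 1" and FT: "blinfun_apply F T = norm T" for F S
  proof (rule ccontr)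
    assume nt: "\<not> ?thesis"
    define v where "v = blinfun_apply S x0"
    define \<delta> where "\<delta> = blinfun_apply F S - blinfun_apply g v"
    have \<delta>: "\<delta> > 0" using nt Gapp v_def \<delta>_def by simp
    define c where "c = blinfun_apply g v + \<delta>/2"
    obtain s where s: "s > 0" and sc: "norm (u + s *\<^sub>R v) < norm u + s * c"
      using smooth_dir[OF u0 g1 gu guniq, of v c] c_def \<delta> by auto
    have Fb: "\<And>X. blinfun_apply F X \<le> norm X"
      using norm_blinfun[of F] F1 by (metis abs_le_D1 mult_1 real_norm_def)
    define FS where "FS = blinfun_apply F S"
    have lowT: "norm T + t * FS \<le> norm (T + t *\<^sub>R S)" for t
    proof -
      have "blinfun_apply F (T + t *\<^sub>R S) = norm T + t * FS"
        using FT FS_def by (simp add: blinfun.add_right blinfun.scaleR_right)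
      then show ?thesis using Fb[of "T + t *\<^sub>R S"] by simp
    qed
    define tn where "tn n = s * inverse (real (Suc n))" for n
    have tn0: "tn n > 0" for n using s tn_def by simp
    have tns: "tn n \<le> s" for n
    proof -
      have "inverse (real (Suc n)) \<le> 1" by (simp add: inverse_le_1_iff)
      then show ?thesis using s tn_def by (simp add: mult_left_le)
    qed
    have tnlim: "tn \<longlonglongrightarrow> 0" unfolding tn_def
      using tendsto_mult_right_zero[OF LIMSEQ_inverse_real_of_nat, of s] by simp
    have "\<forall>n. \<exists>w. norm w = 1 \<and> norm (T + tn n *\<^sub>R S) - tn n * (\<delta>/4) < norm (blinfun_apply (T + tn n *\<^sub>R S) w)"
    proof
      fix n
      have "tn n * (\<delta>/4) > 0" using tn0[of n] \<delta> by simp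
      from near_norm[OF x01 this, of "T + tn n *\<^sub>R S"]
      show "\<exists>w. norm w = 1 \<and> norm (T + tn n *\<^sub>R S) - tn n * (\<delta>/4) < norm (blinfun_apply (T + tn n *\<^sub>R S) w)" .
    qed
    then obtain y where y1: "\<And>n. norm (y n) = 1"
      and yn: "\<And>n. norm (T + tn n *\<^sub>R S) - tn n * (\<delta>/4) < norm (blinfun_apply (T + tn n *\<^sub>R S) (y n))"
      by metis
    have yA: "norm T + tn n * FS - tn n * (\<delta>/4) < norm (blinfun_apply T (y n) + tn n *\<^sub>R blinfun_apply S (y n))" for n
      using yn[of n] lowT[of "tn n"] by (simp add: plus_blinfun.rep_eq scaleR_blinfun.rep_eq)
    have Tyle: "norm (blinfun_apply T (y n)) \<le> norm T" for n
      using norm_blinfun[of T "y n"] y1 by simp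
    define K where "K = \<bar>FS\<bar> + \<delta>/4 + norm S"
    have Tyge: "norm T - tn n * K \<le> norm (blinfun_apply T (y n))" for n
    proof -
      have "norm (blinfun_apply T (y n) + tn n *\<^sub>R blinfun_apply S (y n)) \<le> norm (blinfun_apply T (y n)) + norm (tn n *\<^sub>R blinfun_apply S (y n))"
        by (rule norm_triangle_ineq)
      also have "norm (tn n *\<^sub>R blinfun_apply S (y n)) = tn n * norm (blinfun_apply S (y n))" using tn0[of n] by simp
      also have "norm (blinfun_apply S (y n)) \<le> norm S" using norm_blinfun[of S "y n"] y1 by simp
      finally have a: "norm (blinfun_apply T (y n) + tn n *\<^sub>R blinfun_apply S (y n)) \<le> norm (blinfun_apply T (y n)) + tn n * norm S"
        using tn0[of n] by (simp add: mult_left_mono)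
      have "tn n * FS \<ge> - (tn n * \<bar>FS\<bar>)" using tn0[of n] mult_left_mono[of "-\<bar>FS\<bar>" FS "tn n"] by simp
      then show ?thesis using a yA[of n] unfolding K_def by (simp add: algebra_simps)
    qed
    have "norming_sequence T y" unfolding norming_sequence_def
    proof (intro conjI allI)
      show "norm (y n) = 1" for n by (rule y1)
      have l: "(\<lambda>n. norm T - tn n * K) \<longlonglongrightarrow> norm T"
        using tendsto_diff[OF tendsto_const tendsto_mult_left_zero[OF tnlim, of K], of "norm T"] by simp
      show "(\<lambda>n. norm (blinfun_apply T (y n))) \<longlonglongrightarrow> norm T"
        by (rule tendsto_sandwich[OF _ _ l tendsto_const]) (use Tyle Tyge in auto)
    qed
    from assms(4)[OF this] obtain r a where r: "strict_mono r" and a: "\<bar>a\<bar> = 1"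
      and ylim: "(y \<circ> r) \<longlonglongrightarrow> a *\<^sub>R x0" by blast
    define z where "z n = a *\<^sub>R y (r n)" for n
    have aa: "a * a = 1" using a by (metis abs_mult_self_eq mult_1)
    have zlim: "z \<longlonglongrightarrow> x0"
    proof -
      have "(\<lambda>n. a *\<^sub>R (y \<circ> r) n) \<longlonglongrightarrow> a *\<^sub>R (a *\<^sub>R x0)"
        by (intro tendsto_scaleR tendsto_const ylim)
      then show ?thesis using aa unfolding z_def by (simp add: o_def)
    qed
    have P: "norm (blinfun_apply T (y m)) + s * (FS - \<delta>/4) \<le> norm (blinfun_apply T (y m) + s *\<^sub>R blinfun_apply S (y m))" for m
    proof -
      define \<tau> where "\<tau> = tn m"
      define Tw where "Tw = blinfun_apply T (y m)"
      define Sw where "Sw = blinfun_apply S (y m)"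
      define lam where "lam = \<tau> / s"
      have \<tau>: "\<tau> > 0" "\<tau> \<le> s" using tn0 tns \<tau>_def by auto
      have l: "0 < lam" "lam \<le> 1" using \<tau> s lam_def by auto
      have eq: "Tw + \<tau> *\<^sub>R Sw = (1 - lam) *\<^sub>R Tw + lam *\<^sub>R (Tw + s *\<^sub>R Sw)"
        using s lam_def by (simp add: algebra_simps)
      have "norm (Tw + \<tau> *\<^sub>R Sw) \<le> norm ((1 - lam) *\<^sub>R Tw) + norm (lam *\<^sub>R (Tw + s *\<^sub>R Sw))"
        unfolding eq by (rule norm_triangle_ineq)
      also have "\<dots> = (1 - lam) * norm Tw + lam * norm (Tw + s *\<^sub>R Sw)" using l by simp
      finally have up: "norm (Tw + \<tau> *\<^sub>R Sw) \<le> (1 - lam) * norm Tw + lam * norm (Tw + s *\<^sub>R Sw)" .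
      have lo: "norm Tw + \<tau> * (FS - \<delta>/4) < norm (Tw + \<tau> *\<^sub>R Sw)"
        using yA[of m] Tyle[of m] unfolding \<tau>_def Tw_def Sw_def by (simp add: algebra_simps)
      have "\<tau> * (FS - \<delta>/4) \<le> lam * (norm (Tw + s *\<^sub>R Sw) - norm Tw)"
        using up lo by (simp add: algebra_simps)
      then have "s * (\<tau> * (FS - \<delta>/4)) \<le> s * (lam * (norm (Tw + s *\<^sub>R Sw) - norm Tw))"
        using s by (simp add: mult_left_mono)
      also have "s * (lam * (norm (Tw + s *\<^sub>R Sw) - norm Tw)) = \<tau> * (norm (Tw + s *\<^sub>R Sw) - norm Tw)"
        using s lam_def by simp
      finally have "\<tau> * (s * (FS - \<delta>/4)) \<le> \<tau> * (norm (Tw + s *\<^sub>R Sw) - norm Tw)"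
        by (simp add: algebra_simps)
      then have "s * (FS - \<delta>/4) \<le> norm (Tw + s *\<^sub>R Sw) - norm Tw" using \<tau> by simp
      then show ?thesis unfolding Tw_def Sw_def by simp
    qed
    have Pz: "norm (blinfun_apply T (z n)) + s * (FS - \<delta>/4) \<le> norm (blinfun_apply T (z n) + s *\<^sub>R blinfun_apply S (z n))" for n
    proof -
      have e1: "norm (blinfun_apply T (z n)) = norm (blinfun_apply T (y (r n)))"
        using a unfolding z_def by (simp add: blinfun.scaleR_right)
      have "blinfun_apply T (z n) + s *\<^sub>R blinfun_apply S (z n) = a *\<^sub>R (blinfun_apply T (y (r n)) + s *\<^sub>R blinfun_apply S (y (r n)))"
        unfolding z_def by (simp add: blinfun.scaleR_right algebra_simps)
      then have e2: "norm (blinfun_apply T (z n) + s *\<^sub>R blinfun_apply S (z n)) = norm (blinfun_apply T (y (r n)) + s *\<^sub>R blinfun_apply S (y (r n)))"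
        using a by simp
      show ?thesis using P[of "r n"] e1 e2 by simp
    qed
    have L1: "(\<lambda>n. norm (blinfun_apply T (z n)) + s * (FS - \<delta>/4)) \<longlonglongrightarrow> norm u + s * (FS - \<delta>/4)"
      unfolding u_def by (intro tendsto_intros zlim)
    have L2: "(\<lambda>n. norm (blinfun_apply T (z n) + s *\<^sub>R blinfun_apply S (z n))) \<longlonglongrightarrow> norm (u + s *\<^sub>R v)"
      unfolding u_def v_def by (intro tendsto_intros zlim)
    have "norm u + s * (FS - \<delta>/4) \<le> norm (u + s *\<^sub>R v)"
      using LIMSEQ_le[OF L1 L2] Pz by blast
    moreover have "FS - \<delta>/4 = c + \<delta>/4" unfolding c_def \<delta>_def FS_def by (simp add: field_simps)
    ultimately have "norm u + s * c + s * (\<delta>/4) \<le> norm (u + s *\<^sub>R v)" by (simp add: algebra_simps)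
    moreover have "s * (\<delta>/4) > 0" using s \<delta> by simp
    ultimately show False using sc by linarith
  qed
  show ?thesis unfolding smooth_point_def
  proof (intro conjI)
    show "T \<noteq> 0" using Tpos by auto
    show "\<exists>!f :: ('a \<Rightarrow>\<^sub>L 'b) \<Rightarrow>\<^sub>L real. norm f = 1 \<and> blinfun_apply f T = norm T"
    proof (rule ex1I[of _ G])
    show "norm G = 1 \<and> blinfun_apply G T = norm T" using \<open>norm G = 1\<close> GT by simp
  next
    fix F assume F: "norm F = 1 \<and> blinfun_apply F T = norm T"
    show "F = G"
    proof (rule blinfun_eqI)
      fix S
      have "blinfun_apply F S \<le> blinfun_apply G S" using main F by blast
      moreover have "blinfun_apply F (- S) \<le> blinfun_apply G (- S)" using main F by blast
      ultimately show "blinfun_apply F S = blinfun_apply G S" by (simp add: blinfun.minus_right)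
    qed
  qed
  qed
qed
end
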